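(* Under the standing assumptions below, for all $c,d,e\in I$ and $k\in\{0,\dots,n\}$: if $c\prec_k d$, $c\prec_k e$ and $d\prec e$, then $d\prec_k e$.
   Context: Standing assumptions: $I$ is a finite set of weighted constraints with default values on a finite domain $D$ such that distinct constraints have distinct variable sets, $\mathcal H(I)=(\mathrm{var}(I),\{\mathrm{var}(c)\mid c\in I\})$ is $\beta$-acyclic, and $(x_1,\dots,x_n)$ is a $\beta$-elimination order of $\mathcal H(I)$ (an enumeration of $\mathrm{var}(I)$ such that for each $k$, $x_{k+1}$ is a nest point—the edges containing it are totally ordered by inclusion—of the hypergraph with vertices $\mathrm{var}(I)\setminus X_k$ and edges $\{e\setminus X_k\}\setminus\{\emptyset\}$). $X_k=\{x_1,\dots,x_k\}$. For $c,d\in I$: $c\prec d$ iff there is $k$ with $\mathrm{var}(c)\setminus X_k\subsetneq\mathrm{var}(d)\setminus X_k$; $c\preceq d$ iff $c\prec d$ or $c=d$. Relations $\prec_k$ are defined inductively: $\prec_0=\emptyset$; $c\prec_{k+1}d$ iff $c\prec_k d$ or there is $e\in I$ with $c\preceq_k e\prec d$ and $x_{k+1}\in\mathrm{var}(d)\cap\mathrm{var}(e)$; here $c\preceq_k d$ iff $c=d$ or $c\prec_k d$. *)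

theory Defs
  imports Main
begin

text \<open>Constraints are abstracted to a type 'c together with a scope function
  var :: 'c \<Rightarrow> 'v set; only the scopes matter for the relations below.\<close>

definition var_set :: "'c set \<Rightarrow> ('c \<Rightarrow> 'v set) \<Rightarrow> 'v set" where
  "var_set I var = (\<Union>c\<in>I. var c)"

definition hyp_edges :: "'c set \<Rightarrow> ('c \<Rightarrow> 'v set) \<Rightarrow> 'v set set" where
  "hyp_edges I var = var ` I"

definition Xk :: "'v list \<Rightarrow> nat \<Rightarrow> 'v set" where
  "Xk xs k = set (take k xs)"

definition nest_point :: "'v set set \<Rightarrow> 'v \<Rightarrow> bool" where
  "nest_point E x \<longleftrightarrow> (\<forall>e\<in>E. \<forall>f\<in>E. x \<in> e \<and> x \<in> f \<longrightarrow> e \<subseteq> f \<or> f \<subseteq> e)"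

definition reduced_edges :: "'v set set \<Rightarrow> 'v set \<Rightarrow> 'v set set" where
  "reduced_edges E X = (\<lambda>e. e - X) ` E - {{}}"

definition beta_elim_order :: "'c set \<Rightarrow> ('c \<Rightarrow> 'v set) \<Rightarrow> 'v list \<Rightarrow> bool" where
  "beta_elim_order I var xs \<longleftrightarrow>
     distinct xs \<and> set xs = var_set I var \<and>
     (\<forall>k < length xs. xs ! k \<in> var_set I var - Xk xs k \<and>
        nest_point (reduced_edges (hyp_edges I var) (Xk xs k)) (xs ! k))"

definition beta_acyclic :: "'c set \<Rightarrow> ('c \<Rightarrow> 'v set) \<Rightarrow> bool" where
  "beta_acyclic I var \<longleftrightarrow> (\<exists>xs. beta_elim_order I var xs)"

definition prec :: "('c \<Rightarrow> 'v set) \<Rightarrow> 'v list \<Rightarrow> 'c \<Rightarrow> 'c \<Rightarrow> bool" where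
  "prec var xs c d \<longleftrightarrow> (\<exists>k. var c - Xk xs k \<subset> var d - Xk xs k)"

text \<open>c \<prec>_k d (x_{k+1} = xs ! k)\<close>
fun precK :: "'c set \<Rightarrow> ('c \<Rightarrow> 'v set) \<Rightarrow> 'v list \<Rightarrow> nat \<Rightarrow> 'c \<Rightarrow> 'c \<Rightarrow> bool" where
  "precK I var xs 0 c d = False"
| "precK I var xs (Suc k) c d =
     (precK I var xs k c d \<or>
      (\<exists>e\<in>I. (c = e \<or> precK I var xs k c e) \<and> prec var xs e d \<and>
              xs ! k \<in> var d \<inter> var e))"

end

theory Submission
  imports Defs
begin

lemma Xk_mono: "k \<le> k' \<Longrightarrow> Xk xs k \<subseteq> Xk xs k'"
  by (simp add: Xk_def set_take_subset_set_take)

lemma prec_antisym: "prec var xs f g \<Longrightarrow> prec var xs g f \<Longrightarrow> False"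
proof -
  assume "prec var xs f g" "prec var xs g f"
  then obtain i j where i: "var f - Xk xs i \<subset> var g - Xk xs i"
    and j: "var g - Xk xs j \<subset> var f - Xk xs j" unfolding prec_def by blast
  show False
  proof (cases "i \<le> j")
    case True
    then have "Xk xs i \<subseteq> Xk xs j" by (rule Xk_mono)
    then show False using i j by blast
  next
    case False
    then have "Xk xs j \<subseteq> Xk xs i" by (intro Xk_mono) simp
    then show False using i j by blast
  qed
qed

lemma prec_cycle: "prec var xs f g \<Longrightarrow> prec var xs g h \<Longrightarrow> prec var xs h f \<Longrightarrow> False"
proof -
  assume "prec var xs f g" "prec var xs g h" "prec var xs h f"
  then obtain i j l where i: "var f - Xk xs i \<subset> var g - Xk xs i"
    and j: "var g - Xk xs j \<subset> var h - Xk xs j"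
    and l: "var h - Xk xs l \<subset> var f - Xk xs l" unfolding prec_def by blast
  consider "j \<le> i" "l \<le> i" | "i \<le> j" "l \<le> j" | "i \<le> l" "j \<le> l" by linarith
  then show False
  proof cases
    case 1
    then have "Xk xs j \<subseteq> Xk xs i" "Xk xs l \<subseteq> Xk xs i" by (simp_all add: Xk_mono)
    then show False using i j l by blast
  next
    case 2
    then have "Xk xs i \<subseteq> Xk xs j" "Xk xs l \<subseteq> Xk xs j" by (simp_all add: Xk_mono)
    then show False using i j l by blast
  next
    case 3
    then have "Xk xs i \<subseteq> Xk xs l" "Xk xs j \<subseteq> Xk xs l" by (simp_all add: Xk_mono)
    then show False using i j l by blast
  qed
qed

lemma elim_nx: "beta_elim_order I var xs \<Longrightarrow> k < length xs \<Longrightarrow> xs ! k \<notin> Xk xs k"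
proof -
  assume a: "beta_elim_order I var xs" "k < length xs"
  have "\<forall>k < length xs. xs ! k \<in> var_set I var - Xk xs k \<and>
        nest_point (reduced_edges (hyp_edges I var) (Xk xs k)) (xs ! k)"
    using a(1) unfolding beta_elim_order_def by (elim conjE)
  then show ?thesis using a(2) by blast
qed

lemma nest:
  assumes "beta_elim_order I var xs" "k < length xs" "f \<in> I" "d \<in> I"
    "xs ! k \<in> var f" "xs ! k \<in> var d"
  shows "var f - Xk xs k \<subseteq> var d - Xk xs k \<or> var d - Xk xs k \<subseteq> var f - Xk xs k"
proof -
  have np: "nest_point (reduced_edges (hyp_edges I var) (Xk xs k)) (xs ! k)"
    and nx: "xs ! k \<notin> Xk xs k"
  proof -
    have "\<forall>k < length xs. xs ! k \<in> var_set I var - Xk xs k \<and>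
        nest_point (reduced_edges (hyp_edges I var) (Xk xs k)) (xs ! k)"
      using assms(1) unfolding beta_elim_order_def by (elim conjE)
    then have "xs ! k \<in> var_set I var - Xk xs k \<and>
        nest_point (reduced_edges (hyp_edges I var) (Xk xs k)) (xs ! k)"
      using assms(2) by blast
    then show "nest_point (reduced_edges (hyp_edges I var) (Xk xs k)) (xs ! k)" "xs ! k \<notin> Xk xs k"
      by blast+
  qed
  have memf: "var f - Xk xs k \<in> reduced_edges (hyp_edges I var) (Xk xs k)"
  proof -
    have "var f \<in> hyp_edges I var" unfolding hyp_edges_def using assms(3) by (rule imageI)
    then have "var f - Xk xs k \<in> (\<lambda>e. e - Xk xs k) ` hyp_edges I var" by (rule imageI)
    moreover have "var f - Xk xs k \<noteq> {}" using assms(5) nx by blast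
    ultimately show ?thesis unfolding reduced_edges_def by blast
  qed
  have memd: "var d - Xk xs k \<in> reduced_edges (hyp_edges I var) (Xk xs k)"
  proof -
    have "var d \<in> hyp_edges I var" unfolding hyp_edges_def using assms(4) by (rule imageI)
    then have "var d - Xk xs k \<in> (\<lambda>e. e - Xk xs k) ` hyp_edges I var" by (rule imageI)
    moreover have "var d - Xk xs k \<noteq> {}" using assms(6) nx by blast
    ultimately show ?thesis unfolding reduced_edges_def by blast
  qed
  have "xs ! k \<in> var f - Xk xs k" "xs ! k \<in> var d - Xk xs k" using assms(5,6) nx by auto
  moreover have "\<forall>e\<in>reduced_edges (hyp_edges I var) (Xk xs k). \<forall>f\<in>reduced_edges (hyp_edges I var) (Xk xs k).
      xs ! k \<in> e \<and> xs ! k \<in> f \<longrightarrow> e \<subseteq> f \<or> f \<subseteq> e"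
    using np unfolding nest_point_def .
  ultimately show ?thesis using memf memd by (meson)
qed

lemma nest_prec:
  assumes "beta_elim_order I var xs" "k < length xs" "f \<in> I" "d \<in> I"
    "xs ! k \<in> var f" "xs ! k \<in> var d" "prec var xs f d"
  shows "var f - Xk xs k \<subseteq> var d - Xk xs k"
proof (rule ccontr)
  assume na: "\<not> ?thesis"
  then have dk: "var d - Xk xs k \<subseteq> var f - Xk xs k" using nest[OF assms(1-6)] by blast
  obtain m where m: "var f - Xk xs m \<subset> var d - Xk xs m" using assms(7) unfolding prec_def by blast
  show False
  proof (cases "k \<le> m")
    case True
    then have "Xk xs k \<subseteq> Xk xs m" by (rule Xk_mono)
    then show False using m dk by blast
  next
    case False
    then have "Xk xs m \<subseteq> Xk xs k" by (intro Xk_mono) simp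
    then show False using m na by blast
  qed
qed

lemma total:
  assumes eo: "beta_elim_order I var xs" and inj: "inj_on var I"
    and "f \<in> I" "d \<in> I" "f \<noteq> d"
  shows "prec var xs f d \<or> prec var xs d f"
proof (rule ccontr)
  assume nn: "\<not> ?thesis"
  have sub: "var g \<subseteq> Xk xs (length xs)" if "g \<in> I" for g
    using eo that unfolding beta_elim_order_def var_set_def Xk_def by auto
  define A where "A = {m. var f - Xk xs m \<subseteq> var d - Xk xs m}"
  define B where "B = {m. var d - Xk xs m \<subseteq> var f - Xk xs m}"
  have nA: "length xs \<in> A" using sub assms(3,4) unfolding A_def by blast
  have nB: "length xs \<in> B" using sub assms(3,4) unfolding B_def by blast
  define a where "a = Least (\<lambda>m. m \<in> A)"
  define b where "b = Least (\<lambda>m. m \<in> B)"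
  have aA: "a \<in> A" unfolding a_def using nA by (rule LeastI)
  have bB: "b \<in> B" unfolding b_def using nB by (rule LeastI)
  have aL: "\<And>m. m \<in> A \<Longrightarrow> a \<le> m" unfolding a_def by (rule Least_le)
  have bL: "\<And>m. m \<in> B \<Longrightarrow> b \<le> m" unfolding b_def by (rule Least_le)
  have "\<not> a < b"
  proof
    assume "a < b"
    then have "a \<notin> B" using bL by fastforce
    then have "prec var xs f d" using aA unfolding A_def B_def prec_def by blast
    then show False using nn by blast
  qed
  moreover have "\<not> b < a"
  proof
    assume "b < a"
    then have "b \<notin> A" using aL by fastforce
    then have "prec var xs d f" using bB unfolding A_def B_def prec_def by blast
    then show False using nn by blast
  qed
  ultimately have ab: "a = b" by simp
  show False
  proof (cases a)
    case 0
    then have "var f = var d" using aA bB ab unfolding A_def B_def Xk_def by auto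
    then show False using inj assms(3-5) unfolding inj_on_def by blast
  next
    case (Suc m)
    have "a \<le> length xs" using aL nA by blast
    then have ml: "m < length xs" using Suc by simp
    have XS: "Xk xs a = Xk xs m \<union> {xs ! m}"
      using Suc ml unfolding Xk_def by (simp add: take_Suc_conv_app_nth)
    have "m \<notin> A" using aL Suc by fastforce
    moreover have "m \<notin> B" using bL Suc ab by fastforce
    ultimately obtain y z where y: "y \<in> var f" "y \<notin> Xk xs m" "y \<notin> var d"
      and z: "z \<in> var d" "z \<notin> Xk xs m" "z \<notin> var f"
      unfolding A_def B_def by blast
    have "y = xs ! m" using y aA XS unfolding A_def by blast
    moreover have "z = xs ! m" using z bB XS ab unfolding B_def by blast
    ultimately show False using y z by simp
  qed
qed

lemma precK_sub:
  assumes eo: "beta_elim_order I var xs"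
  shows "k \<le> length xs \<Longrightarrow> precK I var xs k c d \<Longrightarrow> d \<in> I
    \<Longrightarrow> var c - Xk xs k \<subseteq> var d - Xk xs k"
proof (induction k arbitrary: d)
  case 0
  then show ?case by simp
next
  case (Suc k)
  have mono: "Xk xs k \<subseteq> Xk xs (Suc k)" by (rule Xk_mono) simp
  from Suc.prems(2) consider "precK I var xs k c d"
    | e where "e \<in> I" "c = e \<or> precK I var xs k c e" "prec var xs e d"
              "xs ! k \<in> var d" "xs ! k \<in> var e" by auto
  then show ?case
  proof cases
    case 1
    then have "var c - Xk xs k \<subseteq> var d - Xk xs k" using Suc by simp
    then show ?thesis using mono by blast
  next
    case 2
    have ed: "var e - Xk xs k \<subseteq> var d - Xk xs k"
      using nest_prec[OF eo _ 2(1) Suc.prems(3) 2(5) 2(4) 2(3)] Suc.prems(1) by simp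
    have "var c - Xk xs k \<subseteq> var e - Xk xs k"
      using 2(2) Suc.IH[of e] Suc.prems(1) 2(1) by auto
    then show ?thesis using ed mono by blast
  qed
qed

lemma precK_SucI:
  "g \<in> I \<Longrightarrow> d = g \<or> precK I var xs k d g \<Longrightarrow> prec var xs g e \<Longrightarrow>
   xs ! k \<in> var e \<Longrightarrow> xs ! k \<in> var g \<Longrightarrow> precK I var xs (Suc k) d e"
  by (simp only: precK.simps) blast

theorem lemma6:
  fixes I :: "'c set" and var :: "'c \<Rightarrow> 'v set" and xs :: "'v list"
  assumes "finite I"
    and "\<And>c. c \<in> I \<Longrightarrow> finite (var c)"
    and "inj_on var I"
    and "beta_acyclic I var"
    and "beta_elim_order I var xs"
    and "c \<in> I" and "d \<in> I" and "e \<in> I"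
    and "k \<le> length xs"
    and "precK I var xs k c d" and "precK I var xs k c e"
    and "prec var xs d e"
  shows "precK I var xs k d e"
  using assms(6-12)
proof (induction k arbitrary: c d e)
  case 0
  then show ?case by simp
next
  case (Suc k)
  note eo = assms(5)
  note tot = total[OF eo assms(3)]
  have kl: "k < length xs" using Suc.prems by simp
  note sub = precK_sub[OF eo, of k]
  have nxk: "xs ! k \<notin> Xk xs k" using elim_nx[OF eo kl] .
  have done_d: "precK I var xs (Suc k) d e" if "xs ! k \<in> var d" "xs ! k \<in> var e"
    using precK_SucI[of d I d var xs k e] that Suc.prems(2) Suc.prems(7) by blast
  from Suc.prems(5) consider "precK I var xs k c d"
    | g where "g \<in> I" "c = g \<or> precK I var xs k c g" "prec var xs g d"
              "xs ! k \<in> var d" "xs ! k \<in> var g" by auto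
  note cd = this
  from Suc.prems(6) consider "precK I var xs k c e"
    | f where "f \<in> I" "c = f \<or> precK I var xs k c f" "prec var xs f e"
              "xs ! k \<in> var e" "xs ! k \<in> var f" by auto
  note ce = this
  show ?case
  proof (cases rule: ce)
    case 1
    show ?thesis
    proof (cases rule: cd)
      case 1
      then have "precK I var xs k d e" using Suc.IH[of c d e] Suc.prems \<open>precK I var xs k c e\<close> by simp
      then show ?thesis by simp
    next
      case (2 g)
      have cs: "var c - Xk xs k \<subseteq> var e - Xk xs k"
        using sub \<open>precK I var xs k c e\<close> kl Suc.prems(3) by simp
      show ?thesis
      proof (cases "c = g")
        case True
        then show ?thesis using done_d cs 2 nxk by blast
      next
        case False
        then have cg: "precK I var xs k c g" using 2 by simp
        have "g \<noteq> e" using 2(3) Suc.prems(7) prec_antisym by metis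
        then consider "prec var xs g e" | "prec var xs e g" using tot[OF 2(1) Suc.prems(3)] by blast
        then show ?thesis
        proof cases
          case 1
          then have "precK I var xs k g e"
            using Suc.IH[of c g e] Suc.prems cg 2(1) \<open>precK I var xs k c e\<close> by simp
          then have "var g - Xk xs k \<subseteq> var e - Xk xs k" using sub kl Suc.prems(3) by simp
          then show ?thesis using done_d 2 nxk by blast
        next
          case 3: 2
          show ?thesis using prec_cycle[OF 3 2(3) Suc.prems(7)] by simp
        qed
      qed
    qed
  next
    case (2 f)
    note F = 2
    show ?thesis
    proof (cases rule: cd)
      case 1
      have cs: "var c - Xk xs k \<subseteq> var d - Xk xs k"
        using sub \<open>precK I var xs k c d\<close> kl Suc.prems(2) by simp
      show ?thesis
      proof (cases "c = f")
        case True
        then show ?thesis using done_d cs 2 nxk by blast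
      next
        case False
        then have cf: "precK I var xs k c f" using 2 by simp
        show ?thesis
        proof (cases "d = f")
          case True
          then show ?thesis using precK_SucI[of f I d var xs k e] 2 by blast
        next
          case False
          then consider "prec var xs d f" | "prec var xs f d" using tot[OF Suc.prems(2) 2(1)] by blast
          then show ?thesis
          proof cases
            case 1
            then have "precK I var xs k d f"
              using Suc.IH[of c d f] Suc.prems cf 2(1) \<open>precK I var xs k c d\<close> by simp
            then show ?thesis using precK_SucI[of f I d var xs k e] 2 by blast
          next
            case 3: 2
            then have "precK I var xs k f d"
              using Suc.IH[of c f d] Suc.prems cf 2(1) \<open>precK I var xs k c d\<close> by simp
            then have "var f - Xk xs k \<subseteq> var d - Xk xs k" using sub kl Suc.prems(2) by simp
            then show ?thesis using done_d 2 nxk by blast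
          qed
        qed
      qed
    next
      case (2 g)
      show ?thesis by (rule done_d[OF 2(4) F(4)])
    qed
  qed
qed

end
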